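(* Let $\rho\in(0,1)$ and $\xi\in\mathbb{R}$, and on $(x,y)\in(0,\pi)\times\mathbb{R}$ with conjugate momenta $(P_x,P_y)$ consider the Hamiltonian $$H=\frac{1}{2(1-\rho\cos x)}\Big(\sin^2 x\,(P_x^2+P_y^2)+\xi\Big)$$ (associated with the metric $g=(1-\rho\cos x)\,\frac{dx^2+dy^2}{\sin^2 x}$ and the potential $\frac{\xi}{2(1-\rho\cos x)}$), together with the quadratic functions $$S_+=e^{y}\big(\sin x\,P_xP_y+\cos x\,P_y^2-\rho H\big),\qquad S_-=e^{-y}\big(-\sin x\,P_xP_y+\cos x\,P_y^2-\rho H\big).$$ Then the superintegrable systems $\{H,P_y,S_+\}$ and $\{H,P_y,S_-\}$ (the metric $g$, and the functions $H,P_y,S_+,S_-$) are globally defined on a manifold $M$ diffeomorphic to the hyperbolic plane $\mathbb{H}^2$.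
   Context: The hyperbolic plane $\mathbb{H}^2$ is the sheet $x_1^2+x_2^2-x_3^2=-1$, $x_3\ge 1$ of the hyperboloid in $\mathbb{R}^3$ with the metric induced by $dx_1^2+dx_2^2-dx_3^2$. *)

theory Defs
  imports "HOL-Analysis.Analysis"
begin

fun iter_pderiv :: "'a::euclidean_space list \<Rightarrow> ('a \<Rightarrow> real) \<Rightarrow> 'a \<Rightarrow> real" where
  "iter_pderiv [] f = f"
| "iter_pderiv (d # ds) f = (\<lambda>x. frechet_derivative (iter_pderiv ds f) (at x) d)"

definition smooth_on :: "'a::euclidean_space set \<Rightarrow> ('a \<Rightarrow> real) \<Rightarrow> bool" where
  "smooth_on S f \<longleftrightarrow> open S \<and>
     (\<forall>ds. set ds \<subseteq> Basis \<longrightarrow> (\<forall>x\<in>S. iter_pderiv ds f differentiable (at x)))"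

definition smooth_map_on :: "'a::euclidean_space set \<Rightarrow> ('a \<Rightarrow> 'b::euclidean_space) \<Rightarrow> bool" where
  "smooth_map_on S f \<longleftrightarrow> (\<forall>b\<in>Basis. smooth_on S (\<lambda>x. f x \<bullet> b))"

definition hyperbolic_plane :: "(real \<times> real \<times> real) set" where
  "hyperbolic_plane = {(x1, x2, x3). x1\<^sup>2 + x2\<^sup>2 - x3\<^sup>2 = -1 \<and> x3 \<ge> 1}"

definition diffeomorphic_to_submanifold ::
  "'a::euclidean_space set \<Rightarrow> 'b::euclidean_space set \<Rightarrow> bool" where
  "diffeomorphic_to_submanifold S N \<longleftrightarrow>
     (\<exists>f g W. open W \<and> N \<subseteq> W \<and> smooth_map_on S f \<and> smooth_map_on W g \<and>
        f ` S = N \<and> (\<forall>p\<in>S. g (f p) = p) \<and> (\<forall>q\<in>N. f (g q) = q))"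

definition strip :: "(real \<times> real) set" where
  "strip = {0<..<pi} \<times> UNIV"

text \<open>Conformal factor of g = (1 - rho cos x)(dx^2+dy^2)/sin^2 x.\<close>
definition metric_coeff :: "real \<Rightarrow> real \<times> real \<Rightarrow> real" where
  "metric_coeff \<rho> p = (1 - \<rho> * cos (fst p)) / (sin (fst p))\<^sup>2"

text \<open>Phase-space functions on T*strip, points ((x,y),(Px,Py)).\<close>
definition Ham :: "real \<Rightarrow> real \<Rightarrow> (real \<times> real) \<times> (real \<times> real) \<Rightarrow> real" where
  "Ham \<rho> \<xi> z = (case z of ((x, y), (px, py)) \<Rightarrow>
      ((sin x)\<^sup>2 * (px\<^sup>2 + py\<^sup>2) + \<xi>) / (2 * (1 - \<rho> * cos x)))"

definition Py :: "(real \<times> real) \<times> (real \<times> real) \<Rightarrow> real" where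
  "Py z = snd (snd z)"

definition S_plus :: "real \<Rightarrow> real \<Rightarrow> (real \<times> real) \<times> (real \<times> real) \<Rightarrow> real" where
  "S_plus \<rho> \<xi> z = (case z of ((x, y), (px, py)) \<Rightarrow>
      exp y * (sin x * px * py + cos x * py\<^sup>2 - \<rho> * Ham \<rho> \<xi> z))"

definition S_minus :: "real \<Rightarrow> real \<Rightarrow> (real \<times> real) \<times> (real \<times> real) \<Rightarrow> real" where
  "S_minus \<rho> \<xi> z = (case z of ((x, y), (px, py)) \<Rightarrow>
      exp (- y) * (- sin x * px * py + cos x * py\<^sup>2 - \<rho> * Ham \<rho> \<xi> z))"

end

theory Submission imports Defs begin
inductive_set sm :: "'a::real_normed_vector set \<Rightarrow> ('a \<Rightarrow> real) set" for S where
  sm_const: "(\<lambda>x. c) \<in> sm S"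
| sm_lin: "bounded_linear L \<Longrightarrow> L \<in> sm S"
| sm_add: "f \<in> sm S \<Longrightarrow> g \<in> sm S \<Longrightarrow> (\<lambda>x. f x + g x) \<in> sm S"
| sm_mult: "f \<in> sm S \<Longrightarrow> g \<in> sm S \<Longrightarrow> (\<lambda>x. f x * g x) \<in> sm S"
| sm_inv: "f \<in> sm S \<Longrightarrow> (\<forall>x\<in>S. f x \<noteq> 0) \<Longrightarrow> (\<lambda>x. inverse (f x)) \<in> sm S"
| sm_sin: "f \<in> sm S \<Longrightarrow> (\<lambda>x. sin (f x)) \<in> sm S"
| sm_cos: "f \<in> sm S \<Longrightarrow> (\<lambda>x. cos (f x)) \<in> sm S"
| sm_exp: "f \<in> sm S \<Longrightarrow> (\<lambda>x. exp (f x)) \<in> sm S"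
| sm_arctan: "f \<in> sm S \<Longrightarrow> (\<lambda>x. arctan (f x)) \<in> sm S"
| sm_sqrt: "f \<in> sm S \<Longrightarrow> (\<forall>x\<in>S. f x > 0) \<Longrightarrow> (\<lambda>x. sqrt (f x)) \<in> sm S"

lemma sm_minus: "f \<in> sm S \<Longrightarrow> (\<lambda>x. - f x) \<in> sm S"
  using sm_mult[OF sm_const[where c="-1"], where g=f] by simp

lemma sm_diff: "f \<in> sm S \<Longrightarrow> g \<in> sm S \<Longrightarrow> (\<lambda>x. f x - g x) \<in> sm S"
  using sm_add[OF _ sm_minus[of g]] by simp

lemma sm_divide: "f \<in> sm S \<Longrightarrow> g \<in> sm S \<Longrightarrow> (\<forall>x\<in>S. g x \<noteq> 0) \<Longrightarrow> (\<lambda>x. f x / g x) \<in> sm S"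
  using sm_mult[OF _ sm_inv[of g]] by (simp add: divide_inverse)

lemma sm_power2: "f \<in> sm S \<Longrightarrow> (\<lambda>x. (f x)\<^sup>2) \<in> sm S"
  using sm_mult[where f=f and g=f] by (simp add: power2_eq_square)

lemma exD: "\<forall>d. (\<lambda>x. E d x) \<in> sm S \<Longrightarrow> \<forall>x\<in>S. (f has_derivative (\<lambda>d. E d x)) (at x) \<Longrightarrow>
  \<exists>D. (\<forall>d. D d \<in> sm S) \<and> (\<forall>x\<in>S. (f has_derivative (\<lambda>d. D d x)) (at x))"
  by (rule exI[of _ E]) auto

lemma sm_deriv:
  assumes "f \<in> sm S"
  shows "\<exists>D. (\<forall>d. D d \<in> sm S) \<and> (\<forall>x\<in>S. (f has_derivative (\<lambda>d. D d x)) (at x))"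
  using assms
proof induction
  case (sm_const c)
  show ?case by (rule exI[of _ "\<lambda>d x. 0"]) (auto intro: sm.intros)
next
  case (sm_lin L)
  show ?case
    by (rule exI[of _ "\<lambda>d x. L d"]) (auto intro: sm.intros bounded_linear_imp_has_derivative sm_lin)
next
  case (sm_add f g)
  then obtain Df Dg where "\<forall>d. Df d \<in> sm S" "\<forall>x\<in>S. (f has_derivative (\<lambda>d. Df d x)) (at x)"
    "\<forall>d. Dg d \<in> sm S" "\<forall>x\<in>S. (g has_derivative (\<lambda>d. Dg d x)) (at x)" by blast
  then show ?case
    by (intro exI[of _ "\<lambda>d x. Df d x + Dg d x"]) (auto intro: sm.intros derivative_intros)
next
  case (sm_mult f g)
  then obtain Df Dg where "\<forall>d. Df d \<in> sm S" "\<forall>x\<in>S. (f has_derivative (\<lambda>d. Df d x)) (at x)"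
    "\<forall>d. Dg d \<in> sm S" "\<forall>x\<in>S. (g has_derivative (\<lambda>d. Dg d x)) (at x)" by blast
  moreover have "\<forall>d. (\<lambda>x. f x * Dg d x + Df d x * g x) \<in> sm S"
  proof
    fix d show "(\<lambda>x. f x * Dg d x + Df d x * g x) \<in> sm S"
      using sm.sm_add[OF sm.sm_mult[OF sm_mult.hyps(1), of "Dg d"] sm.sm_mult[of "Df d" S g]] calculation sm_mult.hyps
      by blast
  qed
  ultimately show ?case
    by (intro exI[of _ "\<lambda>d x. f x * Dg d x + Df d x * g x"]) (auto intro!: has_derivative_mult)
next
  case (sm_inv f)
  then obtain Df where Df: "\<forall>d. Df d \<in> sm S" "\<forall>x\<in>S. (f has_derivative (\<lambda>d. Df d x)) (at x)" by blast
  have I: "(\<lambda>x. inverse (f x)) \<in> sm S" using sm_inv by (blast intro: sm.sm_inv)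
  have "\<forall>d. (\<lambda>x. - (inverse (f x) * Df d x * inverse (f x))) \<in> sm S"
    using sm_minus[OF sm.sm_mult[OF sm.sm_mult[OF I Df(1)[rule_format]] I]] by blast
  moreover have "\<forall>x\<in>S. ((\<lambda>x. inverse (f x)) has_derivative (\<lambda>d. - (inverse (f x) * Df d x * inverse (f x)))) (at x)"
  proof
    fix x assume x: "x \<in> S"
    show "((\<lambda>x. inverse (f x)) has_derivative (\<lambda>d. - (inverse (f x) * Df d x * inverse (f x)))) (at x)"
      by (rule Deriv.has_derivative_inverse) (use Df(2) sm_inv.hyps(2) x in auto)
  qed
  ultimately show ?case by (rule exD)
next
  case (sm_sin f)
  then obtain Df where Df: "\<forall>d. Df d \<in> sm S" "\<forall>x\<in>S. (f has_derivative (\<lambda>d. Df d x)) (at x)" by blast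
  have "\<forall>d. (\<lambda>x. Df d x * cos (f x)) \<in> sm S"
    using sm.sm_mult[OF Df(1)[rule_format] sm.sm_cos[OF sm_sin.hyps(1)]] by blast
  moreover have "\<forall>x\<in>S. ((\<lambda>x. sin (f x)) has_derivative (\<lambda>d. Df d x * cos (f x))) (at x)"
  proof
    fix x assume x: "x \<in> S"
    show "((\<lambda>x. sin (f x)) has_derivative (\<lambda>d. Df d x * cos (f x))) (at x)"
      by (rule has_derivative_sin) (use Df(2) x in auto)
  qed
  ultimately show ?case by (rule exD)
next
  case (sm_cos f)
  then obtain Df where Df: "\<forall>d. Df d \<in> sm S" "\<forall>x\<in>S. (f has_derivative (\<lambda>d. Df d x)) (at x)" by blast
  have "\<forall>d. (\<lambda>x. Df d x * - sin (f x)) \<in> sm S"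
    using sm.sm_mult[OF Df(1)[rule_format] sm_minus[OF sm.sm_sin[OF sm_cos.hyps(1)]]] by blast
  moreover have "\<forall>x\<in>S. ((\<lambda>x. cos (f x)) has_derivative (\<lambda>d. Df d x * - sin (f x))) (at x)"
  proof
    fix x assume x: "x \<in> S"
    show "((\<lambda>x. cos (f x)) has_derivative (\<lambda>d. Df d x * - sin (f x))) (at x)"
      by (rule has_derivative_cos) (use Df(2) x in auto)
  qed
  ultimately show ?case by (rule exD)
next
  case (sm_exp f)
  then obtain Df where Df: "\<forall>d. Df d \<in> sm S" "\<forall>x\<in>S. (f has_derivative (\<lambda>d. Df d x)) (at x)" by blast
  have "\<forall>d. (\<lambda>x. Df d x * exp (f x)) \<in> sm S"
    using sm.sm_mult[OF Df(1)[rule_format] sm.sm_exp[OF sm_exp.hyps(1)]] by blast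
  moreover have "\<forall>x\<in>S. ((\<lambda>x. exp (f x)) has_derivative (\<lambda>d. Df d x * exp (f x))) (at x)"
  proof
    fix x assume x: "x \<in> S"
    show "((\<lambda>x. exp (f x)) has_derivative (\<lambda>d. Df d x * exp (f x))) (at x)"
      by (rule has_derivative_exp) (use Df(2) x in auto)
  qed
  ultimately show ?case by (rule exD)
next
  case (sm_arctan f)
  then obtain Df where Df: "\<forall>d. Df d \<in> sm S" "\<forall>x\<in>S. (f has_derivative (\<lambda>d. Df d x)) (at x)" by blast
  have A: "(\<lambda>x. 1 + (f x)\<^sup>2) \<in> sm S"
    using sm.sm_add[OF sm_const sm_power2[OF sm_arctan.hyps(1)]] by blast
  have "(\<lambda>x. inverse (1 + (f x)\<^sup>2)) \<in> sm S"
    by (rule sm.sm_inv[OF A]) (metis add_pos_nonneg zero_le_power2 zero_less_one less_irrefl)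
  then have "\<forall>d. (\<lambda>x. Df d x * inverse (1 + (f x)\<^sup>2)) \<in> sm S"
    using sm.sm_mult[OF Df(1)[rule_format]] by blast
  moreover have "\<forall>x\<in>S. ((\<lambda>x. arctan (f x)) has_derivative (\<lambda>d. Df d x * inverse (1 + (f x)\<^sup>2))) (at x)"
  proof
    fix x assume x: "x \<in> S"
    show "((\<lambda>x. arctan (f x)) has_derivative (\<lambda>d. Df d x * inverse (1 + (f x)\<^sup>2))) (at x)"
      by (rule has_derivative_arctan) (use Df(2) x in auto)
  qed
  ultimately show ?case by (rule exD)
next
  case (sm_sqrt f)
  then obtain Df where Df: "\<forall>d. Df d \<in> sm S" "\<forall>x\<in>S. (f has_derivative (\<lambda>d. Df d x)) (at x)" by blast
  have Q: "(\<lambda>x. sqrt (f x)) \<in> sm S" using sm_sqrt by (blast intro: sm.sm_sqrt)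
  have "(\<lambda>x. inverse (sqrt (f x)) / 2) \<in> sm S"
    by (rule sm_divide[OF sm.sm_inv[OF Q] sm_const]) (use sm_sqrt.hyps(2) in auto)
  then have "\<forall>d. (\<lambda>x. Df d x * (inverse (sqrt (f x)) / 2)) \<in> sm S"
    using sm.sm_mult[OF Df(1)[rule_format]] by blast
  moreover have "\<forall>x\<in>S. ((\<lambda>x. sqrt (f x)) has_derivative (\<lambda>d. Df d x * (inverse (sqrt (f x)) / 2))) (at x)"
  proof
    fix x assume x: "x \<in> S"
    show "((\<lambda>x. sqrt (f x)) has_derivative (\<lambda>d. Df d x * (inverse (sqrt (f x)) / 2))) (at x)"
      by (rule DERIV_compose_FDERIV[OF DERIV_real_sqrt]) (use Df(2) sm_sqrt.hyps(2) x in auto)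
  qed
  ultimately show ?case by (rule exD)
qed

lemma sm_iter:
  fixes f :: "'a::euclidean_space \<Rightarrow> real"
  assumes "open S" "f \<in> sm S"
  shows "\<exists>g\<in>sm S. \<forall>x\<in>S. iter_pderiv ds f x = g x"
proof (induction ds)
  case Nil then show ?case using assms by auto
next
  case (Cons d ds)
  then obtain g where g: "g \<in> sm S" "\<forall>x\<in>S. iter_pderiv ds f x = g x" by blast
  obtain D where D: "\<forall>d. D d \<in> sm S" "\<forall>x\<in>S. (g has_derivative (\<lambda>d. D d x)) (at x)"
    using sm_deriv[OF g(1)] by blast
  have "\<forall>x\<in>S. iter_pderiv (d # ds) f x = D d x"
  proof
    fix x assume x: "x \<in> S"
    have "(iter_pderiv ds f has_derivative (\<lambda>d. D d x)) (at x)"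
      using has_derivative_transform_within_open[OF D(2)[rule_format, OF x] assms(1) x] g(2) by metis
    then show "iter_pderiv (d # ds) f x = D d x"
      by (simp add: frechet_derivative_at[symmetric])
  qed
  then show ?case using D(1) by blast
qed

lemma sm_smooth:
  fixes f :: "'a::euclidean_space \<Rightarrow> real"
  assumes "open S" "f \<in> sm S"
  shows "smooth_on S f"
  unfolding smooth_on_def
proof (intro conjI assms allI impI ballI)
  fix ds :: "'a list" and x assume x: "x \<in> S"
  obtain g where g: "g \<in> sm S" "\<forall>x\<in>S. iter_pderiv ds f x = g x" using sm_iter[OF assms] by blast
  obtain D where D: "\<forall>x\<in>S. (g has_derivative (\<lambda>d. D d x)) (at x)"
    using sm_deriv[OF g(1)] by blast
  have "(iter_pderiv ds f has_derivative (\<lambda>d. D d x)) (at x)"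
    using has_derivative_transform_within_open[OF D[rule_format, OF x] assms(1) x] g(2) by metis
  then show "iter_pderiv ds f differentiable at x" unfolding differentiable_def by blast
qed


lemma bl1: "bounded_linear (\<lambda>p::real\<times>real. fst p)" "bounded_linear (\<lambda>p::real\<times>real. snd p)"
  by (rule bounded_linear_fst bounded_linear_snd)+

lemma sm_c1: "(\<lambda>p::real\<times>real. fst p) \<in> sm S" "(\<lambda>p::real\<times>real. snd p) \<in> sm S"
  by (rule sm_lin, rule bl1)+

lemma sm_c2:
  "(\<lambda>z::(real\<times>real)\<times>(real\<times>real). fst (fst z)) \<in> sm S"
  "(\<lambda>z::(real\<times>real)\<times>(real\<times>real). snd (fst z)) \<in> sm S"
  "(\<lambda>z::(real\<times>real)\<times>(real\<times>real). fst (snd z)) \<in> sm S"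
  "(\<lambda>z::(real\<times>real)\<times>(real\<times>real). snd (snd z)) \<in> sm S"
  by (rule sm_lin; rule bounded_linear_compose[OF bounded_linear_fst bounded_linear_fst] bounded_linear_compose[OF bounded_linear_snd bounded_linear_fst]
      bounded_linear_compose[OF bounded_linear_fst bounded_linear_snd] bounded_linear_compose[OF bounded_linear_snd bounded_linear_snd])+

lemma sm_c3:
  "(\<lambda>q::real\<times>real\<times>real. fst q) \<in> sm S"
  "(\<lambda>q::real\<times>real\<times>real. fst (snd q)) \<in> sm S"
  by (rule sm_lin; rule bounded_linear_fst bounded_linear_compose[OF bounded_linear_fst bounded_linear_snd])+

lemmas smI = sm_add sm_mult sm_diff sm_minus sm_power2 sm_sin sm_cos sm_exp sm_arctan sm_const sm_c1 sm_c2 sm_c3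

lemma open_strip: "open strip" unfolding strip_def by (intro open_Times) auto

lemma sin_strip: "p \<in> strip \<Longrightarrow> sin (fst p) > 0"
  unfolding strip_def by (auto intro: sin_gt_zero)

lemma den_pos: fixes \<rho> x :: real assumes "\<rho> < 1" and that: "0 < \<rho>" shows "1 - \<rho> * cos x > 0"
proof -
  have "\<rho> * cos x \<le> \<rho> * 1" using mult_left_mono[OF cos_le_one, of \<rho> x] that by simp
  then show ?thesis using assms by linarith
qed

lemma L1: assumes "0 < x" "x < pi" shows "arctan (-(cos x / sin x)) = x - pi/2"
proof -
  have "tan (x - pi/2) = -(cos x / sin x)"
    by (simp add: tan_def sin_diff cos_diff)
  then show ?thesis using assms arctan_tan[of "x - pi/2"] by simp
qed

lemma L2: "-(cos (pi/2 + arctan t) / sin (pi/2 + arctan t)) = t"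
  using tan_arctan[of t] by (simp add: tan_def sin_add cos_add)

definition fmap :: "real \<times> real \<Rightarrow> real \<times> real \<times> real" where
  "fmap p = (-(cos (fst p) / sin (fst p)), snd p, sqrt (1 + (-(cos (fst p) / sin (fst p)))\<^sup>2 + (snd p)\<^sup>2))"

definition gmap :: "real \<times> real \<times> real \<Rightarrow> real \<times> real" where
  "gmap q = (pi/2 + arctan (fst q), fst (snd q))"

lemma diffeo: "diffeomorphic_to_submanifold strip hyperbolic_plane"
  unfolding diffeomorphic_to_submanifold_def
proof (intro exI[of _ fmap] exI[of _ gmap] exI[of _ UNIV] conjI)
  show "smooth_map_on strip fmap"
    unfolding smooth_map_on_def
  proof
    fix b :: "real \<times> real \<times> real"
    obtain b1 b2 b3 where b: "b = (b1, b2, b3)" by (cases b) auto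
    have e: "(\<lambda>x. fmap x \<bullet> b) = (\<lambda>p. (-(cos (fst p) / sin (fst p))) * b1 + snd p * b2
        + sqrt (1 + (-(cos (fst p) / sin (fst p)))\<^sup>2 + (snd p)\<^sup>2) * b3)"
      by (auto simp: fmap_def b)
    have q: "(\<lambda>p. -(cos (fst p) / sin (fst p))) \<in> sm strip"
      by (intro sm_minus sm_divide smI) (use sin_strip in fastforce)
    have r: "(\<lambda>p. sqrt (1 + (-(cos (fst p) / sin (fst p)))\<^sup>2 + (snd p)\<^sup>2)) \<in> sm strip"
      by (intro sm_sqrt sm_add sm_power2 q smI) (auto intro!: add_pos_nonneg)
    show "smooth_on strip (\<lambda>x. fmap x \<bullet> b)"
      unfolding e by (intro sm_smooth open_strip sm_add sm_mult sm_const q r sm_c1)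
  qed
  show "smooth_map_on UNIV gmap"
    unfolding smooth_map_on_def
  proof
    fix b :: "real \<times> real"
    obtain b1 b2 where b: "b = (b1, b2)" by (cases b) auto
    have e: "(\<lambda>x. gmap x \<bullet> b) = (\<lambda>q. (pi/2 + arctan (fst q)) * b1 + fst (snd q) * b2)"
      by (auto simp: gmap_def b)
    show "smooth_on UNIV (\<lambda>x. gmap x \<bullet> b)"
      unfolding e by (intro sm_smooth open_UNIV smI)
  qed
  show "fmap ` strip = hyperbolic_plane"
  proof
    show "fmap ` strip \<subseteq> hyperbolic_plane"
    proof
      fix q assume "q \<in> fmap ` strip"
      then obtain p where "q = fmap p" by blast
      moreover have "(sqrt (1 + (-(cos (fst p) / sin (fst p)))\<^sup>2 + (snd p)\<^sup>2))\<^sup>2 = 1 + (-(cos (fst p) / sin (fst p)))\<^sup>2 + (snd p)\<^sup>2"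
        by (intro real_sqrt_pow2) (auto intro: add_nonneg_nonneg)
      moreover have "1 \<le> sqrt (1 + (-(cos (fst p) / sin (fst p)))\<^sup>2 + (snd p)\<^sup>2)"
        by (rule real_le_rsqrt) simp
      ultimately show "q \<in> hyperbolic_plane" by (simp add: hyperbolic_plane_def fmap_def)
    qed
    show "hyperbolic_plane \<subseteq> fmap ` strip"
    proof
      fix q assume qH: "q \<in> hyperbolic_plane"
      obtain q1 q2 q3 where qq: "q = (q1, q2, q3)" by (cases q) auto
      have h: "q1\<^sup>2 + q2\<^sup>2 - q3\<^sup>2 = -1" "q3 \<ge> 1" using qH by (auto simp: hyperbolic_plane_def qq)
      have "q3 = sqrt (1 + q1\<^sup>2 + q2\<^sup>2)"
        using h by (intro real_sqrt_unique[symmetric]) auto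
      moreover have "gmap q \<in> strip"
        using arctan_bounded[of q1] by (auto simp: gmap_def strip_def qq)
      ultimately have "fmap (gmap q) = q" by (simp add: fmap_def gmap_def qq L2)
      then show "q \<in> fmap ` strip" using \<open>gmap q \<in> strip\<close> by (metis image_eqI)
    qed
  qed
  show "\<forall>p\<in>strip. gmap (fmap p) = p"
    by (auto simp: strip_def gmap_def fmap_def L1)
  show "\<forall>q\<in>hyperbolic_plane. fmap (gmap q) = q"
  proof
    fix q assume qH: "q \<in> hyperbolic_plane"
    obtain q1 q2 q3 where qq: "q = (q1, q2, q3)" by (cases q) auto
    have h: "q1\<^sup>2 + q2\<^sup>2 - q3\<^sup>2 = -1" "q3 \<ge> 1" using qH by (auto simp: hyperbolic_plane_def qq)
    have "q3 = sqrt (1 + q1\<^sup>2 + q2\<^sup>2)"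
      using h by (intro real_sqrt_unique[symmetric]) auto
    then show "fmap (gmap q) = q" by (simp add: fmap_def gmap_def qq L2)
  qed
qed (auto)

lemma open_strip2: "open (strip \<times> (UNIV :: (real \<times> real) set))"
  using open_strip by (intro open_Times) auto

lemma sin_strip2: "z \<in> strip \<times> UNIV \<Longrightarrow> sin (fst (fst z)) > 0"
  using sin_strip by auto

lemma Ham_eq: "Ham \<rho> \<xi> = (\<lambda>z. ((sin (fst (fst z)))\<^sup>2 * ((fst (snd z))\<^sup>2 + (snd (snd z))\<^sup>2) + \<xi>)
     / (2 * (1 - \<rho> * cos (fst (fst z)))))"
  by (auto simp: Ham_def fun_eq_iff split: prod.split)

lemma Ham_sm: assumes "0 < \<rho>" "\<rho> < 1" shows "Ham \<rho> \<xi> \<in> sm (strip \<times> UNIV)"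
  unfolding Ham_eq
  by (intro sm_divide smI) (use den_pos[OF assms(2,1)] in \<open>auto simp: less_le\<close>)

theorem proposition2:
  fixes \<rho> \<xi> :: real
  assumes "0 < \<rho>" and "\<rho> < 1"
  shows "diffeomorphic_to_submanifold strip hyperbolic_plane
       \<and> smooth_on strip (metric_coeff \<rho>)
       \<and> (\<forall>p\<in>strip. metric_coeff \<rho> p > 0)
       \<and> smooth_on (strip \<times> UNIV) (Ham \<rho> \<xi>)
       \<and> smooth_on (strip \<times> UNIV) Py
       \<and> smooth_on (strip \<times> UNIV) (S_plus \<rho> \<xi>)
       \<and> smooth_on (strip \<times> UNIV) (S_minus \<rho> \<xi>)"
proof (intro conjI)
  show "diffeomorphic_to_submanifold strip hyperbolic_plane" by (rule diffeo)
  have me: "metric_coeff \<rho> = (\<lambda>p. (1 - \<rho> * cos (fst p)) / (sin (fst p))\<^sup>2)"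
    by (simp add: metric_coeff_def fun_eq_iff)
  show "smooth_on strip (metric_coeff \<rho>)"
    unfolding me
    by (intro sm_smooth open_strip sm_divide smI) (use sin_strip in fastforce)
  show "\<forall>p\<in>strip. metric_coeff \<rho> p > 0"
  proof
    fix p assume "p \<in> strip"
    then have "sin (fst p) > 0" by (rule sin_strip)
    then show "metric_coeff \<rho> p > 0"
      using den_pos[OF assms(2,1), of "fst p"] by (simp add: metric_coeff_def)
  qed
  have H: "Ham \<rho> \<xi> \<in> sm (strip \<times> UNIV)" by (rule Ham_sm[OF assms])
  show "smooth_on (strip \<times> UNIV) (Ham \<rho> \<xi>)"
    by (rule sm_smooth[OF open_strip2 H])
  show "smooth_on (strip \<times> UNIV) Py"
    unfolding Py_def by (rule sm_smooth[OF open_strip2 sm_c2(4)])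
  have sp: "S_plus \<rho> \<xi> = (\<lambda>z. exp (snd (fst z)) * (sin (fst (fst z)) * fst (snd z) * snd (snd z)
      + cos (fst (fst z)) * (snd (snd z))\<^sup>2 - \<rho> * Ham \<rho> \<xi> z))"
    by (auto simp: S_plus_def fun_eq_iff split: prod.split)
  have sm': "S_minus \<rho> \<xi> = (\<lambda>z. exp (- snd (fst z)) * (- sin (fst (fst z)) * fst (snd z) * snd (snd z)
      + cos (fst (fst z)) * (snd (snd z))\<^sup>2 - \<rho> * Ham \<rho> \<xi> z))"
    by (auto simp: S_minus_def fun_eq_iff split: prod.split)
  have H': "(\<lambda>z. Ham \<rho> \<xi> z) \<in> sm (strip \<times> UNIV)" using H by simp
  show "smooth_on (strip \<times> UNIV) (S_plus \<rho> \<xi>)"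
    unfolding sp by (intro sm_smooth open_strip2 sm_mult sm_diff sm_add H' smI)
  show "smooth_on (strip \<times> UNIV) (S_minus \<rho> \<xi>)"
    unfolding sm' by (intro sm_smooth open_strip2 sm_mult sm_diff sm_add H' smI)
qed

end
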